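(* Let $f\in C^1$ and suppose $f'$ is Lipschitz continuous on the interval between $u_L$ and $u_R$ (i.e. on $[\min\{u_L,u_R\},\max\{u_L,u_R\}]$). Then the Riemann problem $U_t+f(U)_x=0$ for $x\in\mathbb{R}$, $t>0$, with $U(x,0)=u_L$ for $x<0$ and $U(x,0)=u_R$ for $x>0$, has at most one self-similar solution $U(x,t)=u^*(x/t)$ satisfying the viscous wave fan profile criterion.
   Context: Viscous wave fan profile criterion: a self-similar Riemann solution $U(x,t)=u^*(\xi)$, $\xi=x/t$, satisfies it iff there exist solutions $u_\varepsilon\in C^2(\mathbb{R})$ of the Dafermos ODE problem $\varepsilon u_{\xi\xi}=(f'(u)-\xi)u_\xi$ on $\mathbb{R}$, $u(-\infty)=u_L$, $u(+\infty)=u_R$, such that $u_\varepsilon\to u^*$ in $L^1_{loc}(\mathbb{R})$ as $\varepsilon\to 0$. The corollary follows from the paper's Theorem 1.1: under the stated Lipschitz hypothesis, for every $\varepsilon>0$ this ODE problem has exactly one solution. *)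

theory Defs
  imports "HOL-Analysis.Analysis"
begin

definition riemann_data :: "real \<Rightarrow> real \<Rightarrow> real \<Rightarrow> real" where
  "riemann_data uL uR x = (if x < 0 then uL else uR)"

text \<open>Test functions: C^1 with compact support on R x R (points are (x,t));
  phx and pht are the partial derivatives in x and t.\<close>
definition test_function ::
  "(real \<times> real \<Rightarrow> real) \<Rightarrow> (real \<times> real \<Rightarrow> real) \<Rightarrow> (real \<times> real \<Rightarrow> real) \<Rightarrow> bool" where
  "test_function ph phx pht \<longleftrightarrow>
     (\<forall>x t. ((\<lambda>s. ph (s, t)) has_real_derivative phx (x, t)) (at x)) \<and>
     (\<forall>x t. ((\<lambda>s. ph (x, s)) has_real_derivative pht (x, t)) (at t)) \<and>
     continuous_on UNIV phx \<and> continuous_on UNIV pht \<and>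
     (\<exists>R. \<forall>z. norm z > R \<longrightarrow> ph z = 0)"

text \<open>Weak solution of U_t + f(U)_x = 0 on x in R, t > 0 with U(x,0) = u0 x.\<close>
definition weak_solution ::
  "(real \<Rightarrow> real) \<Rightarrow> (real \<times> real \<Rightarrow> real) \<Rightarrow> (real \<Rightarrow> real) \<Rightarrow> bool" where
  "weak_solution f U u0 \<longleftrightarrow>
     U \<in> borel_measurable borel \<and>
     (\<forall>ph phx pht. test_function ph phx pht \<longrightarrow>
        set_integrable lborel {z. snd z > 0} (\<lambda>z. U z * pht z + f (U z) * phx z) \<and>
        (LINT z:{z. snd z > 0}|lborel. U z * pht z + f (U z) * phx z)
          + (LINT x|lborel. u0 x * ph (x, 0)) = 0)"

definition self_similar_riemann_solution ::
  "(real \<Rightarrow> real) \<Rightarrow> real \<Rightarrow> real \<Rightarrow> (real \<Rightarrow> real) \<Rightarrow> bool" where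
  "self_similar_riemann_solution f uL uR us \<longleftrightarrow>
     us \<in> borel_measurable borel \<and>
     weak_solution f (\<lambda>(x, t). us (x / t)) (riemann_data uL uR)"

definition dafermos_solution ::
  "(real \<Rightarrow> real) \<Rightarrow> real \<Rightarrow> real \<Rightarrow> real \<Rightarrow> (real \<Rightarrow> real) \<Rightarrow> bool" where
  "dafermos_solution f' uL uR \<epsilon> u \<longleftrightarrow>
     (\<exists>u1 u2. (\<forall>\<xi>. (u has_real_derivative u1 \<xi>) (at \<xi>)) \<and>
              (\<forall>\<xi>. (u1 has_real_derivative u2 \<xi>) (at \<xi>)) \<and>
              continuous_on UNIV u2 \<and>
              (\<forall>\<xi>. \<epsilon> * u2 \<xi> = (f' (u \<xi>) - \<xi>) * u1 \<xi>)) \<and>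
     (u \<longlongrightarrow> uL) at_bot \<and> (u \<longlongrightarrow> uR) at_top"

definition viscous_profile_criterion ::
  "(real \<Rightarrow> real) \<Rightarrow> real \<Rightarrow> real \<Rightarrow> (real \<Rightarrow> real) \<Rightarrow> bool" where
  "viscous_profile_criterion f' uL uR us \<longleftrightarrow>
     (\<forall>a b. set_integrable lborel {a..b} us) \<and>
     (\<exists>u :: real \<Rightarrow> real \<Rightarrow> real.
        (\<forall>\<epsilon>>0. dafermos_solution f' uL uR \<epsilon> (u \<epsilon>)) \<and>
        (\<forall>a b. ((\<lambda>\<epsilon>. LINT \<xi>:{a..b}|lborel. \<bar>u \<epsilon> \<xi> - us \<xi>\<bar>) \<longlongrightarrow> 0) (at_right 0)))"

end

theory Submission
  imports Defs
begin

lemma lin_zero: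
  fixes w a :: "real \<Rightarrow> real"
  assumes der: "\<And>x. (w has_real_derivative a x * w x) (at x)"
    and ca: "continuous_on UNIV a" and w0: "w x0 = 0"
  shows "w x = 0"
proof -
  define c where "c = min x x0"
  define d where "d = max x x0"
  have "compact (a ` {c..d})"
    by (rule compact_continuous_image) (auto intro: continuous_on_subset[OF ca])
  then obtain M0 where M0: "\<forall>y\<in>{c..d}. norm (a y) \<le> M0"
    by (meson bounded_iff compact_imp_bounded imageI)
  define M where "M = max M0 0"
  have M: "\<And>y. c \<le> y \<Longrightarrow> y \<le> d \<Longrightarrow> \<bar>a y\<bar> \<le> M" using M0 unfolding M_def by force
  define z where "z y = (w y)^2" for y
  have dz: "(z has_real_derivative 2 * a y * z y) (at y)" for y
  proof -
    have "(z has_real_derivative 2 * w y * (a y * w y)) (at y)"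
      unfolding z_def by (auto intro!: derivative_eq_intros der)
    then show ?thesis by (simp add: z_def power2_eq_square algebra_simps)
  qed
  have z0: "z y \<ge> 0" for y unfolding z_def by simp
  show "w x = 0"
  proof (cases "x0 \<le> x")
    case True
    define h where "h y = z y * exp (-2*M*y)" for y
    have "h x \<le> h x0"
    proof (rule DERIV_nonpos_imp_nonincreasing[OF True])
      fix y assume y: "x0 \<le> y" "y \<le> x"
      have "(h has_real_derivative 2 * a y * z y * exp (-2*M*y) + z y * (exp (-2*M*y) * (-2*M))) (at y)"
        unfolding h_def by (auto intro!: derivative_eq_intros dz)
      moreover have "2 * a y * z y * exp (-2*M*y) + z y * (exp (-2*M*y) * (-2*M)) = 2 * (a y - M) * z y * exp (-2*M*y)"
        by (simp add: algebra_simps)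
      moreover have "a y - M \<le> 0" using M[of y] y by (auto simp: c_def d_def)
      ultimately show "\<exists>D. (h has_real_derivative D) (at y) \<and> D \<le> 0"
        using z0[of y] by (metis mult_nonneg_nonneg mult_nonpos_nonneg exp_ge_zero zero_le_numeral mult_nonneg_nonpos)
    qed
    then have "z x * exp (-2*M*x) \<le> 0" using w0 by (simp add: h_def z_def)
    then show ?thesis unfolding z_def by (simp add: mult_le_0_iff)
  next
    case False
    then have xx: "x \<le> x0" by simp
    define h where "h y = z y * exp (2*M*y)" for y
    have "h x \<le> h x0"
    proof (rule DERIV_nonneg_imp_nondecreasing[OF xx])
      fix y assume y: "x \<le> y" "y \<le> x0"
      have "(h has_real_derivative 2 * a y * z y * exp (2*M*y) + z y * (exp (2*M*y) * (2*M))) (at y)"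
        unfolding h_def by (auto intro!: derivative_eq_intros dz)
      moreover have "2 * a y * z y * exp (2*M*y) + z y * (exp (2*M*y) * (2*M)) = 2 * (a y + M) * z y * exp (2*M*y)"
        by (simp add: algebra_simps)
      moreover have "a y + M \<ge> 0" using M[of y] y by (auto simp: c_def d_def)
      ultimately show "\<exists>D. (h has_real_derivative D) (at y) \<and> D \<ge> 0"
        using z0[of y] by (metis mult_nonneg_nonneg exp_ge_zero zero_le_numeral)
    qed
    then have "z x * exp (2*M*x) \<le> 0" using w0 by (simp add: h_def z_def)
    then show ?thesis unfolding z_def by (simp add: mult_le_0_iff)
  qed
qed

locale dsol =
  fixes fp :: "real \<Rightarrow> real" and e uL uR :: real and u u1 u2 :: "real \<Rightarrow> real"
  assumes cf: "continuous_on UNIV fp" and epos: "e > 0"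
    and du: "\<And>x. (u has_real_derivative u1 x) (at x)"
    and du1: "\<And>x. (u1 has_real_derivative u2 x) (at x)"
    and ode: "\<And>x. e * u2 x = (fp (u x) - x) * u1 x"
    and limL: "(u \<longlongrightarrow> uL) at_bot" and limR: "(u \<longlongrightarrow> uR) at_top"
begin

lemma isCont_u: "isCont u x" using du DERIV_isCont by blast
lemma isCont_u1: "isCont u1 x" using du1 DERIV_isCont by blast

lemma u2_eq: "u2 x = (fp (u x) - x) / e * u1 x"
  using ode[of x] epos by (simp add: field_simps)

lemma a_cont: "continuous_on UNIV (\<lambda>x. (fp (u x) - x) / e)"
proof -
  have "continuous_on UNIV (fp \<circ> u)"
    by (rule continuous_on_compose) (auto intro: continuous_at_imp_continuous_on isCont_u continuous_on_subset[OF cf])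
  then show ?thesis
    using epos by (auto intro!: continuous_intros simp: o_def)
qed

lemma u1_lin: "(u1 has_real_derivative (fp (u x) - x) / e * u1 x) (at x)"
  using du1[of x] u2_eq[of x] by simp

lemma u1_zero:
  assumes "u1 x0 = 0" shows "u1 x = 0"
  by (rule lin_zero[OF u1_lin a_cont assms])

lemma trich: "(\<forall>x. u1 x = 0) \<or> (\<forall>x. u1 x > 0) \<or> (\<forall>x. u1 x < 0)"
proof (cases "\<exists>x. u1 x = 0")
  case True then show ?thesis using u1_zero by blast
next
  case False
  have False if "u1 x > 0" "u1 y < 0" for x y
  proof (cases "x \<le> y")
    case True
    from IVT2[of u1 y 0 x, OF _ _ True] that isCont_u1 False show False by force
  next
    case F: False
    from IVT[of u1 y 0 x] F that isCont_u1 False show False by force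
  qed
  then show ?thesis using False by (metis linorder_neqE_linordered_idom)
qed

lemma zero_case:
  assumes "\<forall>x. u1 x = 0" shows "u x = uL" "uR = uL"
proof -
  have c: "u x = u 0" for x by (rule DERIV_isconst_all) (use du assms in auto)
  then have "u = (\<lambda>_. u 0)" by auto
  then have "uL = u 0" "uR = u 0" using limL limR by (metis tendsto_const_iff trivial_limit_at_bot_linorder trivial_limit_at_top_linorder)+
  then show "u x = uL" "uR = uL" using c by auto
qed

lemma neg_case:
  assumes "\<forall>x. u1 x < 0" shows "uR < uL"
proof -
  have "u 1 < u 0" by (rule DERIV_neg_imp_decreasing) (use du assms in auto)
  moreover have "uR \<le> u 1"
  proof (rule tendsto_upperbound[OF limR])
    show "\<forall>\<^sub>F x in at_top. u x \<le> u 1"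
      unfolding eventually_at_top_linorder
    proof (rule exI[of _ 1], intro allI impI)
      fix x :: real assume "1 \<le> x"
      then show "u x \<le> u 1"
        by (rule DERIV_nonpos_imp_nonincreasing) (use du assms less_imp_le in blast)
    qed
  qed simp
  moreover have "u 0 \<le> uL"
  proof (rule tendsto_lowerbound[OF limL])
    show "\<forall>\<^sub>F x in at_bot. u 0 \<le> u x"
      unfolding eventually_at_bot_linorder
    proof (rule exI[of _ 0], intro allI impI)
      fix x :: real assume "x \<le> 0"
      then show "u 0 \<le> u x"
        by (rule DERIV_nonpos_imp_nonincreasing) (use du assms less_imp_le in blast)
    qed
  qed simp
  ultimately show ?thesis by simp
qed

end


locale psol = dsol +
  assumes pos: "\<And>x. u1 x > 0"
begin

lemma smono: "x < y \<Longrightarrow> u x < u y"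
  by (rule DERIV_pos_imp_increasing) (use du pos in blast)+

lemma wmono: "x \<le> y \<Longrightarrow> u x \<le> u y"
  using smono by (cases "x = y") (auto simp: less_imp_le)

lemma inj_u: "inj u"
  by (metis injI linorder_neqE_linordered_idom smono less_irrefl)

lemma upper: "u x < uR"
proof -
  have "u (x+1) \<le> uR"
  proof (rule tendsto_lowerbound[OF limR])
    show "\<forall>\<^sub>F y in at_top. u (x+1) \<le> u y"
      unfolding eventually_at_top_linorder using wmono by blast
  qed simp
  then show ?thesis using smono[of x "x+1"] by simp
qed

lemma lower: "uL < u x"
proof -
  have "uL \<le> u (x-1)"
  proof (rule tendsto_upperbound[OF limL])
    show "\<forall>\<^sub>F y in at_bot. u y \<le> u (x-1)"
      unfolding eventually_at_bot_linorder using wmono by blast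
  qed simp
  then show ?thesis using smono[of "x-1" x] by simp
qed

lemma LR: "uL < uR" using lower[of 0] upper[of 0] by simp

lemma surj_u:
  assumes "uL < s" "s < uR" shows "\<exists>x. u x = s"
proof -
  have "\<forall>\<^sub>F y in at_bot. u y < s" using order_tendstoD(2)[OF limL assms(1)] .
  then obtain a where a: "u a < s" unfolding eventually_at_bot_linorder by auto
  have "\<forall>\<^sub>F y in at_top. s < u y" using order_tendstoD(1)[OF limR assms(2)] .
  then obtain b where b: "s < u b" unfolding eventually_at_top_linorder by auto
  have ab: "a \<le> b" using a b wmono[of b a] by (meson le_less_trans less_le_not_le nle_le)
  show ?thesis using IVT[of u a s b] a b ab isCont_u by force
qed

definition X where "X = inv u"

lemma X_u: "X (u x) = x" unfolding X_def by (simp add: inj_u)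

lemma u_X: "uL < s \<Longrightarrow> s < uR \<Longrightarrow> u (X s) = s"
  unfolding X_def using surj_u by (metis f_inv_into_f rangeI)

lemma X_less: "uL < s \<Longrightarrow> s < uR \<Longrightarrow> s < u y \<Longrightarrow> X s < y"
  using u_X wmono by (metis not_le le_less_trans less_irrefl)

lemma X_deriv:
  assumes "uL < s" "s < uR" shows "(X has_real_derivative inverse (u1 (X s))) (at s)"
proof (rule DERIV_inverse_function[where a = uL and b = uR])
  show "(u has_real_derivative u1 (X s)) (at (X s))" by (rule du)
  show "u1 (X s) \<noteq> 0" using pos[of "X s"] by simp
  show "isCont X s"
    using isCont_inverse_function[where f = u and g = X and x = "X s" and d = 1] X_u isCont_u u_X assms by auto
qed (use assms u_X in auto)

lemma X_greater: "uL < s \<Longrightarrow> s < uR \<Longrightarrow> u y < s \<Longrightarrow> y < X s"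
  using u_X wmono by (metis not_le le_less_trans less_irrefl)

definition p where "p s = u1 (X s)"

lemma p_pos: "p s > 0" unfolding p_def using pos by simp

lemma p_deriv:
  assumes "uL < s" "s < uR" shows "(p has_real_derivative (fp s - X s) / e) (at s)"
proof -
  have "(p has_real_derivative u2 (X s) * inverse (u1 (X s))) (at s)"
    unfolding p_def using DERIV_chain2[OF du1 X_deriv[OF assms]] .
  moreover have "u2 (X s) * inverse (u1 (X s)) = (fp s - X s) / e"
    using u2_eq[of "X s"] u_X[OF assms] pos[of "X s"] epos by (simp add: field_simps)
  ultimately show ?thesis by simp
qed

lemma fp_bound: obtains M where "M > 0" "\<And>y. uL \<le> y \<Longrightarrow> y \<le> uR \<Longrightarrow> \<bar>fp y\<bar> \<le> M"
proof -
  have "compact (fp ` {uL..uR})"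
    by (rule compact_continuous_image) (auto intro: continuous_on_subset[OF cf])
  then obtain M0 where M0: "\<forall>y\<in>{uL..uR}. norm (fp y) \<le> M0"
    by (meson bounded_iff compact_imp_bounded imageI)
  show ?thesis by (rule that[of "max M0 1"]) (use M0 in force)+
qed

lemma decay_top:
  assumes d: "\<delta> > 0" shows "\<forall>\<^sub>F x in at_top. u1 x < \<delta>"
proof -
  obtain M where M: "M > 0" "\<And>y. uL \<le> y \<Longrightarrow> y \<le> uR \<Longrightarrow> \<bar>fp y\<bar> \<le> M" using fp_bound by blast
  have neg: "u2 x \<le> 0" if "x \<ge> M" for x
  proof -
    have "fp (u x) \<le> M" using M(2)[of "u x"] lower[of x] upper[of x] by auto
    then have "fp (u x) - x \<le> 0" using that by simp
    then show ?thesis using u2_eq[of x] pos[of x] epos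
      by (simp add: mult_nonpos_nonneg divide_nonpos_pos less_imp_le)
  qed
  show ?thesis
  proof (cases "\<exists>x0\<ge>M. u1 x0 < \<delta>")
    case True
    then obtain x0 where x0: "x0 \<ge> M" "u1 x0 < \<delta>" by auto
    have "u1 x \<le> u1 x0" if "x \<ge> x0" for x
      by (rule DERIV_nonpos_imp_nonincreasing[OF that]) (use du1 neg x0 in force)
    then show ?thesis unfolding eventually_at_top_linorder using x0 by (meson le_less_trans)
  next
    case False
    then have big: "u1 x \<ge> \<delta>" if "x \<ge> M" for x using that by (meson not_le)
    define Y where "Y = M + (uR - u M) / \<delta> + 1"
    have MY: "M \<le> Y" unfolding Y_def using upper[of M] d by (simp add: field_simps)
    have "u M - \<delta> * M \<le> u Y - \<delta> * Y"
    proof (rule DERIV_nonneg_imp_nondecreasing[OF MY])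
      fix x assume x: "M \<le> x" "x \<le> Y"
      have "((\<lambda>x. u x - \<delta> * x) has_real_derivative u1 x - \<delta>) (at x)"
        by (auto intro!: derivative_eq_intros du)
      then show "\<exists>y. ((\<lambda>x. u x - \<delta> * x) has_real_derivative y) (at x) \<and> y \<ge> 0"
        using big[of x] x by auto
    qed
    then have "u Y \<ge> u M + \<delta> * (Y - M)" by (simp add: algebra_simps)
    also have "\<delta> * (Y - M) = uR - u M + \<delta>" unfolding Y_def using d by (simp add: field_simps)
    finally have "u Y \<ge> uR + \<delta>" by simp
    then show ?thesis using upper[of Y] d by simp
  qed
qed

lemma decay_bot:
  assumes d: "\<delta> > 0" shows "\<forall>\<^sub>F x in at_bot. u1 x < \<delta>"
proof -
  obtain M where M: "M > 0" "\<And>y. uL \<le> y \<Longrightarrow> y \<le> uR \<Longrightarrow> \<bar>fp y\<bar> \<le> M" using fp_bound by blast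
  have posu2: "u2 x \<ge> 0" if "x \<le> -M" for x
  proof -
    have "fp (u x) \<ge> -M" using M(2)[of "u x"] lower[of x] upper[of x] by auto
    then have "fp (u x) - x \<ge> 0" using that by simp
    then show ?thesis using u2_eq[of x] pos[of x] epos
      by (simp add: less_imp_le)
  qed
  show ?thesis
  proof (cases "\<exists>x0\<le>-M. u1 x0 < \<delta>")
    case True
    then obtain x0 where x0: "x0 \<le> -M" "u1 x0 < \<delta>" by auto
    have "u1 x \<le> u1 x0" if "x \<le> x0" for x
      by (rule DERIV_nonneg_imp_nondecreasing[OF that]) (use du1 posu2 x0 in force)
    then show ?thesis unfolding eventually_at_bot_linorder using x0 by (meson le_less_trans)
  next
    case False
    then have big: "u1 x \<ge> \<delta>" if "x \<le> -M" for x using that by (meson not_le)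
    define Y where "Y = -M - (u (-M) - uL) / \<delta> - 1"
    have MY: "Y \<le> -M" unfolding Y_def using lower[of "-M"] d by (simp add: field_simps)
    have "u Y - \<delta> * Y \<le> u (-M) - \<delta> * (-M)"
    proof (rule DERIV_nonneg_imp_nondecreasing[OF MY])
      fix x assume x: "Y \<le> x" "x \<le> -M"
      have "((\<lambda>x. u x - \<delta> * x) has_real_derivative u1 x - \<delta>) (at x)"
        by (auto intro!: derivative_eq_intros du)
      then show "\<exists>y. ((\<lambda>x. u x - \<delta> * x) has_real_derivative y) (at x) \<and> y \<ge> 0"
        using big[of x] x by auto
    qed
    then have "u Y \<le> u (-M) - \<delta> * (-M - Y)" by (simp add: algebra_simps)
    also have "\<delta> * (-M - Y) = u (-M) - uL + \<delta>" unfolding Y_def using d by (simp add: field_simps)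
    finally have "u Y \<le> uL - \<delta>" by simp
    then show ?thesis using lower[of Y] d by simp
  qed
qed

end


lemma core:
  assumes P1: "psol fp e uL uR u u1 u2" and P2: "psol fp e uL uR v v1 v2"
  shows "u = v"
proof -
  interpret A: psol fp e uL uR u u1 u2 by (rule P1)
  interpret B: psol fp e uL uR v v1 v2 by (rule P2)
  define D where "D s = A.X s - B.X s" for s
  define E where "E s = A.p s - B.p s" for s
  define G where "G s = D s * E s" for s
  define Q where "Q s = (E s)^2" for s
  have e: "e > 0" by (rule A.epos)
  have dG: "(G has_real_derivative (- ((E s)^2) / (A.p s * B.p s) - ((D s)^2) / e)) (at s)"
    if s: "uL < s" "s < uR" for s
  proof -
    have "(G has_real_derivative (inverse (A.p s) - inverse (B.p s)) * E s
        + D s * ((fp s - A.X s) / e - (fp s - B.X s) / e)) (at s)"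
      unfolding G_def D_def E_def
      using A.X_deriv[OF s, folded A.p_def] B.X_deriv[OF s, folded B.p_def] A.p_deriv[OF s] B.p_deriv[OF s]
      by (auto intro!: derivative_eq_intros)
    moreover have "(inverse (A.p s) - inverse (B.p s)) * E s
        + D s * ((fp s - A.X s) / e - (fp s - B.X s) / e)
        = - ((E s)^2) / (A.p s * B.p s) - ((D s)^2) / e"
      using A.p_pos[of s] B.p_pos[of s] e unfolding D_def E_def
      by (simp add: field_simps power2_eq_square)
    ultimately show ?thesis by simp
  qed
  have dG_le: "- ((E s)^2) / (A.p s * B.p s) - ((D s)^2) / e \<le> 0" for s
  proof -
    have "(E s)^2 / (A.p s * B.p s) \<ge> 0" using A.p_pos[of s] B.p_pos[of s] by simp
    moreover have "(D s)^2 / e \<ge> 0" using e by simp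
    ultimately show ?thesis by linarith
  qed
  have dQ: "(Q has_real_derivative (- 2 * G s / e)) (at s)"
    if s: "uL < s" "s < uR" for s
  proof -
    have "(Q has_real_derivative 2 * E s * ((fp s - A.X s) / e - (fp s - B.X s) / e)) (at s)"
      unfolding Q_def E_def
      using A.p_deriv[OF s] B.p_deriv[OF s]
      by (auto intro!: derivative_eq_intros)
    moreover have "2 * E s * ((fp s - A.X s) / e - (fp s - B.X s) / e) = - 2 * G s / e"
      using e unfolding G_def D_def by (simp add: field_simps)
    ultimately show ?thesis by simp
  qed
  have Gmono: "G b \<le> G a" if "uL < a" "a \<le> b" "b < uR" for a b
  proof (rule DERIV_nonpos_imp_nonincreasing[OF that(2)])
    fix x assume x: "a \<le> x" "x \<le> b"
    then have "uL < x" "x < uR" using that by auto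
    then show "\<exists>y. (G has_real_derivative y) (at x) \<and> y \<le> 0"
      using dG dG_le by blast
  qed
  have Gz: "G s0 = 0" if s0: "uL < s0" "s0 < uR" for s0
  proof (rule ccontr)
    assume "G s0 \<noteq> 0"
    then have Es0: "E s0 \<noteq> 0" unfolding G_def by simp
    define c where "c = \<bar>E s0\<bar>"
    have c: "c > 0" using Es0 unfolding c_def by simp
    have small: "\<bar>E s\<bar> < c" if "A.p s < c/2" "B.p s < c/2" for s
      using that A.p_pos[of s] B.p_pos[of s] unfolding E_def by linarith
    have big: "\<bar>E s\<bar> \<ge> c" if "Q s0 \<le> Q s" for s
      using that unfolding Q_def c_def by (simp add: abs_le_square_iff)
    show False
    proof (cases "G s0 > 0")
      case True
      have Gp: "G s > 0" if "uL < s" "s \<le> s0" for s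
        using Gmono[of s s0] that s0 True by simp
      have Qm: "Q s0 \<le> Q s" if "uL < s" "s \<le> s0" for s
      proof (rule DERIV_nonpos_imp_nonincreasing[OF that(2)])
        fix x assume x: "s \<le> x" "x \<le> s0"
        show "\<exists>y. (Q has_real_derivative y) (at x) \<and> y \<le> 0"
          using dQ[of x] Gp[of x] x that s0 e by (intro exI[of _ "- 2 * G x / e"]) auto
      qed
      obtain y1 where y1: "\<And>x. x \<le> y1 \<Longrightarrow> u1 x < c/2"
        using A.decay_bot[of "c/2"] c unfolding eventually_at_bot_linorder by auto
      obtain y2 where y2: "\<And>x. x \<le> y2 \<Longrightarrow> v1 x < c/2"
        using B.decay_bot[of "c/2"] c unfolding eventually_at_bot_linorder by auto
      define t where "t = min s0 (min (u y1) (v y2))"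
      have t: "uL < t" unfolding t_def using s0 A.lower B.lower by simp
      define s where "s = (uL + t) / 2"
      have s: "uL < s" "s < t" using t unfolding s_def by auto
      have "A.X s < y1" by (rule A.X_less) (use s t_def s0 in auto)
      then have "A.p s < c/2" unfolding A.p_def using y1 by simp
      moreover have "B.X s < y2" by (rule B.X_less) (use s t_def s0 in auto)
      then have "B.p s < c/2" unfolding B.p_def using y2 by simp
      ultimately have "\<bar>E s\<bar> < c" by (rule small)
      moreover have "\<bar>E s\<bar> \<ge> c" using big Qm s t_def by simp
      ultimately show False by simp
    next
      case False
      then have Gn: "G s0 < 0" using \<open>G s0 \<noteq> 0\<close> by simp
      have Gp: "G s < 0" if "s0 \<le> s" "s < uR" for s
        using Gmono[of s0 s] that s0 Gn by simp
      have Qm: "Q s0 \<le> Q s" if "s0 \<le> s" "s < uR" for s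
      proof (rule DERIV_nonneg_imp_nondecreasing[OF that(1)])
        fix x assume x: "s0 \<le> x" "x \<le> s"
        show "\<exists>y. (Q has_real_derivative y) (at x) \<and> y \<ge> 0"
          using dQ[of x] Gp[of x] x that s0 e by (intro exI[of _ "- 2 * G x / e"]) (auto simp: divide_nonpos_pos)
      qed
      obtain y1 where y1: "\<And>x. x \<ge> y1 \<Longrightarrow> u1 x < c/2"
        using A.decay_top[of "c/2"] c unfolding eventually_at_top_linorder by auto
      obtain y2 where y2: "\<And>x. x \<ge> y2 \<Longrightarrow> v1 x < c/2"
        using B.decay_top[of "c/2"] c unfolding eventually_at_top_linorder by auto
      define t where "t = max s0 (max (u y1) (v y2))"
      have t: "t < uR" unfolding t_def using s0 A.upper B.upper by simp
      define s where "s = (uR + t) / 2"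
      have s: "s < uR" "t < s" using t unfolding s_def by auto
      have "y1 < A.X s" by (rule A.X_greater) (use s t_def s0 in auto)
      then have "A.p s < c/2" unfolding A.p_def using y1 by simp
      moreover have "y2 < B.X s" by (rule B.X_greater) (use s t_def s0 in auto)
      then have "B.p s < c/2" unfolding B.p_def using y2 by simp
      ultimately have "\<bar>E s\<bar> < c" by (rule small)
      moreover have "\<bar>E s\<bar> \<ge> c" using big Qm s t_def by simp
      ultimately show False by simp
    qed
  qed
  have Dz: "D s = 0" if s: "uL < s" "s < uR" for s
  proof -
    have "((\<lambda>_. 0) has_real_derivative 0) (at s)" by simp
    then have "(G has_real_derivative 0) (at s)"
      by (rule has_field_derivative_transform_within_open[where S = "{uL<..<uR}"]) (use s Gz in auto)
    then have "- ((E s)^2) / (A.p s * B.p s) - ((D s)^2) / e = 0"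
      using DERIV_unique dG[OF s] by blast
    moreover have "(E s)^2 / (A.p s * B.p s) \<ge> 0"
      using A.p_pos[of s] B.p_pos[of s] by simp
    ultimately have "(D s)^2 / e \<le> 0" by linarith
    then show ?thesis using e by (simp add: divide_le_0_iff)
  qed
  show "u = v"
  proof
    fix x
    have s: "uL < u x" "u x < uR" using A.lower A.upper by auto
    have "B.X (u x) = x" using Dz[OF s] A.X_u[of x] unfolding D_def by simp
    then show "u x = v x" using B.u_X[OF s] by simp
  qed
qed


lemma dsol_reflect:
  assumes "dsol fp e uL uR u u1 u2"
  shows "dsol (\<lambda>y. fp (-y)) e (-uL) (-uR) (\<lambda>x. - u x) (\<lambda>x. - u1 x) (\<lambda>x. - u2 x)"
proof -
  interpret A: dsol fp e uL uR u u1 u2 by (rule assms)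
  show ?thesis
  proof
    show "continuous_on UNIV (\<lambda>y. fp (- y))"
    proof -
      have "continuous_on UNIV (fp \<circ> uminus)"
        by (rule continuous_on_compose) (auto intro: continuous_on_minus continuous_on_id continuous_on_subset[OF A.cf])
      then show ?thesis by (simp add: o_def)
    qed
    show "0 < e" by (rule A.epos)
    show "((\<lambda>x. - u x) has_real_derivative - u1 x) (at x)" for x
      by (rule DERIV_minus[OF A.du])
    show "((\<lambda>x. - u1 x) has_real_derivative - u2 x) (at x)" for x
      by (rule DERIV_minus[OF A.du1])
    show "e * (- u2 x) = (fp (- (- u x)) - x) * (- u1 x)" for x
      using A.ode[of x] by simp
    show "((\<lambda>x. - u x) \<longlongrightarrow> - uL) at_bot" using A.limL by (rule tendsto_minus)
    show "((\<lambda>x. - u x) \<longlongrightarrow> - uR) at_top" using A.limR by (rule tendsto_minus)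
  qed
qed

lemma dsol_const:
  assumes "dsol fp e uL uR u u1 u2" "uL = uR" shows "u x = uL"
proof -
  interpret A: dsol fp e uL uR u u1 u2 by (rule assms)
  show ?thesis
  proof -
    consider "\<forall>x. u1 x = 0" | "\<forall>x. u1 x > 0" | "\<forall>x. u1 x < 0" using A.trich by blast
    then show ?thesis
    proof cases
      case 1 then show ?thesis using A.zero_case by blast
    next
      case 2
      then interpret psol fp e uL uR u u1 u2
        using A.dsol_axioms unfolding psol_def psol_axioms_def by blast
      show ?thesis using LR assms(2) by simp
    next
      case 3 then show ?thesis using A.neg_case assms(2) by simp
    qed
  qed
qed

lemma dsol_pos:
  assumes "dsol fp e uL uR u u1 u2" "uL < uR" shows "psol fp e uL uR u u1 u2"
proof -
  interpret A: dsol fp e uL uR u u1 u2 by (rule assms)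
  consider "\<forall>x. u1 x = 0" | "\<forall>x. u1 x > 0" | "\<forall>x. u1 x < 0" using A.trich by blast
  then show ?thesis
  proof cases
    case 1 then show ?thesis using A.zero_case assms(2) by simp
  next
    case 2 then show ?thesis using A.dsol_axioms unfolding psol_def psol_axioms_def by blast
  next
    case 3 then show ?thesis using A.neg_case assms(2) by simp
  qed
qed

lemma dsol_unique:
  assumes A: "dsol fp e uL uR u u1 u2" and B: "dsol fp e uL uR v v1 v2"
  shows "u = v"
proof (cases uL uR rule: linorder_cases)
  case less
  show ?thesis by (rule core[OF dsol_pos[OF A less] dsol_pos[OF B less]])
next
  case equal
  show ?thesis using dsol_const[OF A equal] dsol_const[OF B equal] by auto
next
  case greater
  then have g: "-uL < -uR" by simp
  have eq: "(\<lambda>x. - u x) = (\<lambda>x. - v x)"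
    by (rule core[OF dsol_pos[OF dsol_reflect[OF A] g] dsol_pos[OF dsol_reflect[OF B] g]])
  show ?thesis
  proof
    fix x show "u x = v x" using fun_cong[OF eq, of x] by simp
  qed
qed

lemma dafermos_unique:
  assumes cf: "continuous_on UNIV f'" and e: "e > 0"
    and "dafermos_solution f' uL uR e u" and "dafermos_solution f' uL uR e v"
  shows "u = v"
proof -
  obtain u1 u2 where "dsol f' e uL uR u u1 u2"
  proof -
    from assms(3) obtain u1 u2 where
      "\<forall>\<xi>. (u has_real_derivative u1 \<xi>) (at \<xi>)" "\<forall>\<xi>. (u1 has_real_derivative u2 \<xi>) (at \<xi>)"
      "\<forall>\<xi>. e * u2 \<xi> = (f' (u \<xi>) - \<xi>) * u1 \<xi>"
      "(u \<longlongrightarrow> uL) at_bot" "(u \<longlongrightarrow> uR) at_top"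
      unfolding dafermos_solution_def by blast
    then show ?thesis using that[of u1 u2] cf e unfolding dsol_def by blast
  qed
  moreover obtain v1 v2 where "dsol f' e uL uR v v1 v2"
  proof -
    from assms(4) obtain u1 u2 where
      "\<forall>\<xi>. (v has_real_derivative u1 \<xi>) (at \<xi>)" "\<forall>\<xi>. (u1 has_real_derivative u2 \<xi>) (at \<xi>)"
      "\<forall>\<xi>. e * u2 \<xi> = (f' (v \<xi>) - \<xi>) * u1 \<xi>"
      "(v \<longlongrightarrow> uL) at_bot" "(v \<longlongrightarrow> uR) at_top"
      unfolding dafermos_solution_def by blast
    then show ?thesis using that[of u1 u2] cf e unfolding dsol_def by blast
  qed
  ultimately show ?thesis by (rule dsol_unique)
qed


lemma interval_zero:
  fixes F G :: "real \<Rightarrow> real" and us vs :: "real \<Rightarrow> real" and U :: "real \<Rightarrow> real \<Rightarrow> real"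
  assumes ius: "set_integrable lborel {a..b} us" and ivs: "set_integrable lborel {a..b} vs"
    and cU: "\<And>e. e > 0 \<Longrightarrow> continuous_on UNIV (U e)"
    and F: "((\<lambda>e. LINT \<xi>:{a..b}|lborel. \<bar>U e \<xi> - us \<xi>\<bar>) \<longlongrightarrow> 0) (at_right 0)"
    and G: "((\<lambda>e. LINT \<xi>:{a..b}|lborel. \<bar>U e \<xi> - vs \<xi>\<bar>) \<longlongrightarrow> 0) (at_right 0)"
  shows "AE x in lborel. x \<in> {a..b} \<longrightarrow> us x = vs x"
proof -
  define K where "K = (LINT \<xi>:{a..b}|lborel. \<bar>us \<xi> - vs \<xi>\<bar>)"
  have iK: "set_integrable lborel {a..b} (\<lambda>\<xi>. \<bar>us \<xi> - vs \<xi>\<bar>)"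
    by (intro set_integrable_abs set_integral_diff(1) ius ivs)
  have FG: "((\<lambda>e. (LINT \<xi>:{a..b}|lborel. \<bar>U e \<xi> - us \<xi>\<bar>) + (LINT \<xi>:{a..b}|lborel. \<bar>U e \<xi> - vs \<xi>\<bar>)) \<longlongrightarrow> 0) (at_right 0)"
    using tendsto_add[OF F G] by simp
  have "K \<le> 0"
  proof (rule tendsto_lowerbound[OF FG])
    show "\<forall>\<^sub>F e in at_right 0. K \<le> (LINT \<xi>:{a..b}|lborel. \<bar>U e \<xi> - us \<xi>\<bar>) + (LINT \<xi>:{a..b}|lborel. \<bar>U e \<xi> - vs \<xi>\<bar>)"
      using eventually_at_right_less
    proof (rule eventually_mono)
      fix e :: real assume e: "0 < e"
      have iU: "set_integrable lborel {a..b} (U e)"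
        by (rule borel_integrable_atLeastAtMost') (use cU[OF e] continuous_on_subset in blast)
      have i1: "set_integrable lborel {a..b} (\<lambda>\<xi>. \<bar>U e \<xi> - us \<xi>\<bar>)"
        by (intro set_integrable_abs set_integral_diff(1) iU ius)
      have i2: "set_integrable lborel {a..b} (\<lambda>\<xi>. \<bar>U e \<xi> - vs \<xi>\<bar>)"
        by (intro set_integrable_abs set_integral_diff(1) iU ivs)
      have "K \<le> (LINT \<xi>:{a..b}|lborel. \<bar>U e \<xi> - us \<xi>\<bar> + \<bar>U e \<xi> - vs \<xi>\<bar>)"
        unfolding K_def by (rule set_integral_mono[OF iK set_integral_add(1)[OF i1 i2]]) linarith
      also have "\<dots> = (LINT \<xi>:{a..b}|lborel. \<bar>U e \<xi> - us \<xi>\<bar>) + (LINT \<xi>:{a..b}|lborel. \<bar>U e \<xi> - vs \<xi>\<bar>)"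
        by (rule set_integral_add(2)[OF i1 i2])
      finally show "K \<le> (LINT \<xi>:{a..b}|lborel. \<bar>U e \<xi> - us \<xi>\<bar>) + (LINT \<xi>:{a..b}|lborel. \<bar>U e \<xi> - vs \<xi>\<bar>)" .
    qed
  qed simp
  have "K \<ge> 0" unfolding K_def set_lebesgue_integral_def by (rule integral_nonneg_AE) (simp add: indicator_def)
  then have K0: "K = 0" using \<open>K \<le> 0\<close> by simp
  have "AE x in lborel. indicator {a..b} x *\<^sub>R \<bar>us x - vs x\<bar> = 0"
    using K0 integral_nonneg_eq_0_iff_AE[of lborel "\<lambda>x. indicator {a..b} x *\<^sub>R \<bar>us x - vs x\<bar>"] iK
    unfolding K_def set_lebesgue_integral_def set_integrable_def by simp
  then show ?thesis by (rule eventually_mono) (auto simp: indicator_def)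
qed


lemma dafermos_cont: "dafermos_solution f' uL uR e u \<Longrightarrow> continuous_on UNIV u"
  unfolding dafermos_solution_def
  by (metis DERIV_isCont continuous_at_imp_continuous_on)

theorem corollary1p2:
  fixes f f' :: "real \<Rightarrow> real" and uL uR :: real and us vs :: "real \<Rightarrow> real"
  assumes "\<forall>u. (f has_real_derivative f' u) (at u)"
    and "continuous_on UNIV f'"
    and "\<exists>L. L-lipschitz_on {min uL uR..max uL uR} f'"
    and "self_similar_riemann_solution f uL uR us"
    and "viscous_profile_criterion f' uL uR us"
    and "self_similar_riemann_solution f uL uR vs"
    and "viscous_profile_criterion f' uL uR vs"
  shows "AE \<xi> in lborel. us \<xi> = vs \<xi>"
proof -
  obtain U where ius: "\<And>a b. set_integrable lborel {a..b} us"
    and U: "\<And>e. e > 0 \<Longrightarrow> dafermos_solution f' uL uR e (U e)"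
    and UF: "\<And>a b. ((\<lambda>e. LINT \<xi>:{a..b}|lborel. \<bar>U e \<xi> - us \<xi>\<bar>) \<longlongrightarrow> 0) (at_right 0)"
    using assms(5) unfolding viscous_profile_criterion_def by blast
  obtain W where ivs: "\<And>a b. set_integrable lborel {a..b} vs"
    and W: "\<And>e. e > 0 \<Longrightarrow> dafermos_solution f' uL uR e (W e)"
    and WF: "\<And>a b. ((\<lambda>e. LINT \<xi>:{a..b}|lborel. \<bar>W e \<xi> - vs \<xi>\<bar>) \<longlongrightarrow> 0) (at_right 0)"
    using assms(7) unfolding viscous_profile_criterion_def by blast
  have UW: "U e = W e" if "e > 0" for e
    by (rule dafermos_unique[OF assms(2) that U[OF that] W[OF that]])
  have UG: "((\<lambda>e. LINT \<xi>:{a..b}|lborel. \<bar>U e \<xi> - vs \<xi>\<bar>) \<longlongrightarrow> 0) (at_right 0)" for a b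
  proof -
    have "\<forall>\<^sub>F e in at_right 0. (LINT \<xi>:{a..b}|lborel. \<bar>W e \<xi> - vs \<xi>\<bar>) = (LINT \<xi>:{a..b}|lborel. \<bar>U e \<xi> - vs \<xi>\<bar>)"
      using eventually_at_right_less by (rule eventually_mono) (simp add: UW)
    then show ?thesis by (rule iffD1[OF tendsto_cong WF[of a b]])
  qed
  have "AE x in lborel. x \<in> {-real n..real n} \<longrightarrow> us x = vs x" for n :: nat
    by (rule interval_zero[OF ius ivs _ UF UG]) (rule dafermos_cont[OF U])
  then have "AE x in lborel. \<forall>n::nat. x \<in> {-real n..real n} \<longrightarrow> us x = vs x"
    by (subst AE_all_countable) blast
  then show ?thesis
  proof (rule eventually_mono)
    fix x :: real assume H: "\<forall>n::nat. x \<in> {-real n..real n} \<longrightarrow> us x = vs x"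
    have "x \<in> {-real (nat \<lceil>\<bar>x\<bar>\<rceil>)..real (nat \<lceil>\<bar>x\<bar>\<rceil>)}"
      by auto (linarith+)
    then show "us x = vs x" using H by blast
  qed
qed

end
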